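(* Let $\mathcal{F}=\bigcap_{t=1}^k\mathcal{F}^t$ where for each $t\in[k]$, $\mathcal{F}^t\subseteq[0;B]^I$ is a downward-closed subset of $[0;B]^I$. Suppose each $\mathcal{F}^t$ has a monotone $\alpha_t$-CRS with regards to $q$. Then $\mathcal{F}$ has a monotone $\prod_{t=1}^k\alpha_t$-CRS with regards to $q$.
   Context: Let $I=\{1,\dots,n\}$ be a finite set of items and $[0;B]=\{0,1,\dots,B\}$, $[B]=\{1,\dots,B\}$. For $u,v\in[0;B]^I$, $u\le v$ means $u(i)\le v(i)$ for all $i\in I$. A subset $\mathcal{F}\subseteq[0;B]^I$ is downward-closed if $u\le v\in\mathcal{F}$ implies $u\in\mathcal{F}$. Let $q: I\times[0;B]\to[0,1]$ be a probability distribution (for each $i$, $q(i,\cdot)$ sums to 1), and let $v\in[0;B]^I$ be a random vector where, independently for each $i\in I$, $v(i)=j$ with probability $q(i,j)$. For $\alpha\in[0,1]$, an $\alpha$-contention resolution scheme ($\alpha$-CRS) for a downward-closed $\mathcal{F}$ with regards to $q$ is a (possibly randomized) mapping $\psi:[0;B]^I\to\mathcal{F}$ such that (i) for each $i\in I$, $\psi(v)(i)\in\{0,v(i)\}$, and (ii) for each $i\in I$ and $j\in[B]$, $\Pr[\psi(v)(i)=j\mid v(i)=j]\ge\alpha$, where the probability is over both the random choice of $v$ and the internal randomness of $\psi$. An $\alpha$-CRS $\psi$ is monotone if for all $u,v\in[0;B]^I$ with $u(i)=v(i)$ and $u\le v$, $\Pr[\psi(u)(i)=u(i)]\ge\Pr[\psi(v)(i)=v(i)]$,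 where the probability is only over the internal randomness of $\psi$. *)

theory Defs
  imports "HOL-Probability.Probability_Mass_Function"
begin

text \<open>Items are I = {1..n}; vectors in [0;B]^I are extensional functions on I.\<close>
definition vecs :: "nat \<Rightarrow> nat \<Rightarrow> (nat \<Rightarrow> nat) set" where
  "vecs n B = PiE {1..n} (\<lambda>_. {0..B})"

definition down_closed :: "nat \<Rightarrow> nat \<Rightarrow> (nat \<Rightarrow> nat) set \<Rightarrow> bool" where
  "down_closed n B F \<longleftrightarrow> F \<subseteq> vecs n B \<and>
     (\<forall>u v. u \<in> vecs n B \<longrightarrow> v \<in> F \<longrightarrow> (\<forall>i\<in>{1..n}. u i \<le> v i) \<longrightarrow> u \<in> F)"

definition is_dist :: "nat \<Rightarrow> nat \<Rightarrow> (nat \<Rightarrow> nat \<Rightarrow> real) \<Rightarrow> bool" where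
  "is_dist n B q \<longleftrightarrow> (\<forall>i\<in>{1..n}. (\<forall>j\<in>{0..B}. 0 \<le> q i j \<and> q i j \<le> 1) \<and> (\<Sum>j=0..B. q i j) = 1)"

definition vprob :: "nat \<Rightarrow> (nat \<Rightarrow> nat \<Rightarrow> real) \<Rightarrow> (nat \<Rightarrow> nat) \<Rightarrow> real" where
  "vprob n q v = (\<Prod>i\<in>{1..n}. q i (v i))"

text \<open>A randomized scheme is a map from vectors to distributions of output vectors.
  Condition (ii) is stated in the joint form Pr[psi(v)(i)=j and v(i)=j] >= alpha Pr[v(i)=j].\<close>
definition is_CRS :: "nat \<Rightarrow> nat \<Rightarrow> (nat \<Rightarrow> nat) set \<Rightarrow> (nat \<Rightarrow> nat \<Rightarrow> real) \<Rightarrow> real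
    \<Rightarrow> ((nat \<Rightarrow> nat) \<Rightarrow> (nat \<Rightarrow> nat) pmf) \<Rightarrow> bool" where
  "is_CRS n B F q \<alpha> \<psi> \<longleftrightarrow>
     (\<forall>v\<in>vecs n B. \<forall>w\<in>set_pmf (\<psi> v). w \<in> F \<and> (\<forall>i\<in>{1..n}. w i = 0 \<or> w i = v i)) \<and>
     (\<forall>i\<in>{1..n}. \<forall>j\<in>{1..B}.
        (\<Sum>v\<in>{v\<in>vecs n B. v i = j}. vprob n q v * measure_pmf.prob (\<psi> v) {w. w i = j})
          \<ge> \<alpha> * (\<Sum>v\<in>{v\<in>vecs n B. v i = j}. vprob n q v))"

definition monotone_CRS :: "nat \<Rightarrow> nat \<Rightarrow> (nat \<Rightarrow> nat) set \<Rightarrow> (nat \<Rightarrow> nat \<Rightarrow> real) \<Rightarrow> real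
    \<Rightarrow> ((nat \<Rightarrow> nat) \<Rightarrow> (nat \<Rightarrow> nat) pmf) \<Rightarrow> bool" where
  "monotone_CRS n B F q \<alpha> \<psi> \<longleftrightarrow> is_CRS n B F q \<alpha> \<psi> \<and>
     (\<forall>u\<in>vecs n B. \<forall>v\<in>vecs n B. \<forall>i\<in>{1..n}.
        u i = v i \<longrightarrow> (\<forall>l\<in>{1..n}. u l \<le> v l) \<longrightarrow>
        measure_pmf.prob (\<psi> u) {w. w i = u i} \<ge> measure_pmf.prob (\<psi> v) {w. w i = v i})"

end

theory Submission
  imports Defs "HOL-Probability.Product_PMF"
begin

lemma sum_PiE_insert:
  assumes "a \<notin> S" "finite S" "\<forall>l\<in>insert a S. finite (A l)"
  shows "(\<Sum>v\<in>PiE (insert a S) A. h v) = (\<Sum>x\<in>A a. \<Sum>v\<in>PiE S A. h (v(a:=x)))"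
proof -
  have "(\<Sum>v\<in>PiE (insert a S) A. h v) = (\<Sum>p\<in>A a \<times> PiE S A. h ((\<lambda>(y, g). g(a := y)) p))"
    unfolding PiE_insert_eq by (rule sum.reindex[unfolded comp_def]) (rule inj_combinator[OF assms(1)])
  also have "\<dots> = (\<Sum>x\<in>A a. \<Sum>v\<in>PiE S A. h (v(a:=x)))"
    by (simp add: sum.cartesian_product split_def)
  finally show ?thesis .
qed

lemma chebyshev:
  fixes F G :: "nat \<Rightarrow> real"
  assumes "finite X" "\<forall>x\<in>X. 0 \<le> w x"
    and "\<forall>x\<in>X. \<forall>y\<in>X. x \<le> y \<longrightarrow> F y \<le> F x"
    and "\<forall>x\<in>X. \<forall>y\<in>X. x \<le> y \<longrightarrow> G y \<le> G x"
  shows "(\<Sum>x\<in>X. w x * F x) * (\<Sum>x\<in>X. w x * G x) \<le> (\<Sum>x\<in>X. w x * (F x * G x)) * (\<Sum>x\<in>X. w x)"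
proof -
  have key: "0 \<le> (\<Sum>x\<in>X. \<Sum>y\<in>X. w x * w y * ((F x - F y) * (G x - G y)))"
  proof (intro sum_nonneg)
    fix x y assume xy: "x \<in> X" "y \<in> X"
    have "0 \<le> (F x - F y) * (G x - G y)"
    proof (cases "x \<le> y")
      case True then have "F y \<le> F x" "G y \<le> G x" using assms(3,4) xy by auto
      then show ?thesis by (simp add: mult_nonpos_nonpos)
    next
      case False then have "y \<le> x" by simp
      then have "F x \<le> F y" "G x \<le> G y" using assms(3,4) xy by auto
      then show ?thesis by (simp add: mult_nonpos_nonpos)
    qed
    then show "0 \<le> w x * w y * ((F x - F y) * (G x - G y))" using assms(2) xy by simp
  qed
  let ?S = "\<lambda>h. (\<Sum>x\<in>X. \<Sum>y\<in>X. h x y)"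
  have split: "?S (\<lambda>x y. w x * w y * ((F x - F y) * (G x - G y))) =
     ?S (\<lambda>x y. w x * (F x * G x) * w y) + ?S (\<lambda>x y. w y * (F y * G y) * w x)
     - ?S (\<lambda>x y. w x * F x * (w y * G y)) - ?S (\<lambda>x y. w y * F y * (w x * G x))"
    by (simp add: sum_subtractf[symmetric] sum.distrib[symmetric] algebra_simps)
  have t1: "?S (\<lambda>x y. w x * (F x * G x) * w y) = (\<Sum>x\<in>X. w x * (F x * G x)) * (\<Sum>x\<in>X. w x)"
    by (simp add: sum_distrib_left[symmetric] sum_distrib_right[symmetric])
  have t2: "?S (\<lambda>x y. w y * (F y * G y) * w x) = (\<Sum>x\<in>X. w x * (F x * G x)) * (\<Sum>x\<in>X. w x)"
    using t1 sum.swap[of "\<lambda>x y. w y * (F y * G y) * w x" X X] by simp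
  have t3: "?S (\<lambda>x y. w x * F x * (w y * G y)) = (\<Sum>x\<in>X. w x * F x) * (\<Sum>x\<in>X. w x * G x)"
    by (simp add: sum_distrib_left[symmetric] sum_distrib_right[symmetric])
  have t4: "?S (\<lambda>x y. w y * F y * (w x * G x)) = (\<Sum>x\<in>X. w x * F x) * (\<Sum>x\<in>X. w x * G x)"
    using t3 sum.swap[of "\<lambda>x y. w y * F y * (w x * G x)" X X] by (simp add: mult.commute)
  have e: "(\<Sum>x\<in>X. \<Sum>y\<in>X. w x * w y * ((F x - F y) * (G x - G y))) =
     2 * ((\<Sum>x\<in>X. w x * (F x * G x)) * (\<Sum>x\<in>X. w x)) - 2 * ((\<Sum>x\<in>X. w x * F x) * (\<Sum>x\<in>X. w x * G x))"
    using split t1 t2 t3 t4 by simp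
  show ?thesis using key e by linarith
qed

lemma harris:
  fixes q :: "nat \<Rightarrow> nat \<Rightarrow> real" and f g :: "(nat \<Rightarrow> nat) \<Rightarrow> real"
  assumes "finite S" "\<forall>l\<in>S. \<forall>x\<in>A l. 0 \<le> q l x" "\<forall>l\<in>S. finite (A l)"
    and "\<forall>u\<in>PiE S A. \<forall>v\<in>PiE S A. (\<forall>l\<in>S. u l \<le> v l) \<longrightarrow> f v \<le> f u"
    and "\<forall>u\<in>PiE S A. \<forall>v\<in>PiE S A. (\<forall>l\<in>S. u l \<le> v l) \<longrightarrow> g v \<le> g u"
  shows "(\<Sum>v\<in>PiE S A. (\<Prod>l\<in>S. q l (v l)) * f v) * (\<Sum>v\<in>PiE S A. (\<Prod>l\<in>S. q l (v l)) * g v)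
     \<le> (\<Sum>v\<in>PiE S A. (\<Prod>l\<in>S. q l (v l)) * (f v * g v)) * (\<Sum>v\<in>PiE S A. (\<Prod>l\<in>S. q l (v l)))"
  using assms
proof (induction S arbitrary: f g rule: finite_induct)
  case empty
  then show ?case by (simp add: PiE_empty_domain)
next
  case (insert a S)
  define W where "W = (\<lambda>v. \<Prod>l\<in>S. q l (v l))"
  have Wi: "(\<Prod>l\<in>insert a S. q l ((v(a:=x)) l)) = q a x * W v" for v x
  proof -
    have "(\<Prod>l\<in>S. q l ((v(a:=x)) l)) = W v" unfolding W_def
      using insert.hyps(2) by (intro prod.cong) auto
    then show ?thesis using insert.hyps by simp
  qed
  have fin: "\<forall>l\<in>insert a S. finite (A l)" using insert.prems by simp
  define F where "F = (\<lambda>x. \<Sum>v\<in>PiE S A. W v * f (v(a:=x)))"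
  define G where "G = (\<lambda>x. \<Sum>v\<in>PiE S A. W v * g (v(a:=x)))"
  define FG where "FG = (\<lambda>x. \<Sum>v\<in>PiE S A. W v * (f (v(a:=x)) * g (v(a:=x))))"
  define Z where "Z = (\<Sum>v\<in>PiE S A. W v)"
  have mono_upd: "(\<forall>l\<in>insert a S. (u(a:=x)) l \<le> (v(a:=y)) l)"
    if "\<forall>l\<in>S. u l \<le> v l" "x \<le> y" for u v :: "nat \<Rightarrow> nat" and x y
    using that by auto
  have mem: "v(a:=x) \<in> PiE (insert a S) A" if "v \<in> PiE S A" "x \<in> A a" for v x
    using that insert.hyps(2) by (auto simp: PiE_def extensional_def)
  have IH: "F x * G x \<le> FG x * Z" if x: "x \<in> A a" for x
  proof -
    have "(\<Sum>v\<in>PiE S A. W v * f (v(a:=x))) * (\<Sum>v\<in>PiE S A. W v * g (v(a:=x)))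
       \<le> (\<Sum>v\<in>PiE S A. W v * (f (v(a:=x)) * g (v(a:=x)))) * (\<Sum>v\<in>PiE S A. W v)"
      unfolding W_def
    proof (rule insert.IH)
      show "\<forall>l\<in>S. \<forall>x\<in>A l. 0 \<le> q l x" "\<forall>l\<in>S. finite (A l)" using insert.prems by auto
      show "\<forall>u\<in>PiE S A. \<forall>v\<in>PiE S A. (\<forall>l\<in>S. u l \<le> v l) \<longrightarrow> f (v(a:=x)) \<le> f (u(a:=x))"
      proof (intro ballI impI)
        fix u v assume uv: "u \<in> PiE S A" "v \<in> PiE S A" "\<forall>l\<in>S. u l \<le> v l"
        show "f (v(a:=x)) \<le> f (u(a:=x))"
          by (rule insert.prems(3)[rule_format, OF mem[OF uv(1) x] mem[OF uv(2) x] ]) (use uv(3) in auto)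
      qed
      show "\<forall>u\<in>PiE S A. \<forall>v\<in>PiE S A. (\<forall>l\<in>S. u l \<le> v l) \<longrightarrow> g (v(a:=x)) \<le> g (u(a:=x))"
      proof (intro ballI impI)
        fix u v assume uv: "u \<in> PiE S A" "v \<in> PiE S A" "\<forall>l\<in>S. u l \<le> v l"
        show "g (v(a:=x)) \<le> g (u(a:=x))"
          by (rule insert.prems(4)[rule_format, OF mem[OF uv(1) x] mem[OF uv(2) x] ]) (use uv(3) in auto)
      qed
    qed
    then show ?thesis unfolding F_def G_def FG_def Z_def .
  qed
  have Wnn: "0 \<le> W v" if "v \<in> PiE S A" for v
    unfolding W_def using that insert.prems(1) by (intro prod_nonneg) (auto simp: PiE_def)
  have Fm: "F y \<le> F x" if "x \<in> A a" "y \<in> A a" "x \<le> y" for x y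
    unfolding F_def
  proof (rule sum_mono)
    fix v assume v: "v \<in> PiE S A"
    have "f (v(a:=y)) \<le> f (v(a:=x))"
      by (rule insert.prems(3)[rule_format, OF mem[OF v that(1)] mem[OF v that(2)] ]) (use that(3) in auto)
    then show "W v * f (v(a:=y)) \<le> W v * f (v(a:=x))" using Wnn[OF v] by (rule mult_left_mono)
  qed
  have Gm: "G y \<le> G x" if "x \<in> A a" "y \<in> A a" "x \<le> y" for x y
    unfolding G_def
  proof (rule sum_mono)
    fix v assume v: "v \<in> PiE S A"
    have "g (v(a:=y)) \<le> g (v(a:=x))"
      by (rule insert.prems(4)[rule_format, OF mem[OF v that(1)] mem[OF v that(2)] ]) (use that(3) in auto)
    then show "W v * g (v(a:=y)) \<le> W v * g (v(a:=x))" using Wnn[OF v] by (rule mult_left_mono)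
  qed
  have qnn: "\<forall>x\<in>A a. 0 \<le> q a x" using insert.prems(1) by simp
  have decomp: "(\<Sum>v\<in>PiE (insert a S) A. (\<Prod>l\<in>insert a S. q l (v l)) * h v)
      = (\<Sum>x\<in>A a. q a x * (\<Sum>v\<in>PiE S A. W v * h (v(a:=x))))" for h
    by (subst sum_PiE_insert[OF insert.hyps(2,1) fin]) (simp only: Wi sum_distrib_left mult.assoc)
  have Z0: "(\<Sum>v\<in>PiE (insert a S) A. (\<Prod>l\<in>insert a S. q l (v l))) = (\<Sum>x\<in>A a. q a x) * Z"
    using decomp[of "\<lambda>_. 1"] by (simp add: Z_def sum_distrib_right)
  have "(\<Sum>x\<in>A a. q a x * F x) * (\<Sum>x\<in>A a. q a x * G x)
      \<le> (\<Sum>x\<in>A a. q a x * (F x * G x)) * (\<Sum>x\<in>A a. q a x)"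
    using chebyshev[of "A a" "q a" F G] fin qnn Fm Gm by blast
  also have "\<dots> \<le> (\<Sum>x\<in>A a. q a x * (FG x * Z)) * (\<Sum>x\<in>A a. q a x)"
    by (intro mult_right_mono sum_mono mult_left_mono IH sum_nonneg) (use qnn in auto)
  also have "\<dots> = (\<Sum>x\<in>A a. q a x * FG x) * ((\<Sum>x\<in>A a. q a x) * Z)"
    by (simp add: sum_distrib_right[symmetric] sum_distrib_left[symmetric] mult_ac)
  finally show ?case
    using decomp[of f] decomp[of g] decomp[of "\<lambda>v. f v * g v"] Z0
    unfolding F_def G_def FG_def by simp
qed


lemma harris_prod:
  fixes q :: "nat \<Rightarrow> nat \<Rightarrow> real" and f :: "nat \<Rightarrow> (nat \<Rightarrow> nat) \<Rightarrow> real"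
  assumes "finite T" "finite S" "\<forall>l\<in>S. \<forall>x\<in>A l. 0 \<le> q l x" "\<forall>l\<in>S. finite (A l)"
    and "\<forall>t\<in>T. \<forall>u\<in>PiE S A. \<forall>v\<in>PiE S A. (\<forall>l\<in>S. u l \<le> v l) \<longrightarrow> f t v \<le> f t u"
    and "\<forall>t\<in>T. \<forall>v\<in>PiE S A. 0 \<le> f t v"
  shows "(\<Sum>v\<in>PiE S A. (\<Prod>l\<in>S. q l (v l))) * (\<Prod>t\<in>T. \<Sum>v\<in>PiE S A. (\<Prod>l\<in>S. q l (v l)) * f t v)
     \<le> (\<Sum>v\<in>PiE S A. (\<Prod>l\<in>S. q l (v l)) * (\<Prod>t\<in>T. f t v)) * (\<Sum>v\<in>PiE S A. (\<Prod>l\<in>S. q l (v l))) ^ card T"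
  using assms(1,5,6)
proof (induction T rule: finite_induct)
  case empty
  then show ?case by simp
next
  case (insert s T)
  define W where "W = (\<lambda>v. \<Prod>l\<in>S. q l (v l))"
  define Z where "Z = (\<Sum>v\<in>PiE S A. W v)"
  have Wnn: "0 \<le> W v" if "v \<in> PiE S A" for v
    unfolding W_def using that assms(3) by (intro prod_nonneg) (auto simp: PiE_def)
  have Znn: "0 \<le> Z" unfolding Z_def using Wnn by (intro sum_nonneg) auto
  have fs_nn: "0 \<le> (\<Sum>v\<in>PiE S A. W v * f s v)"
    using Wnn insert.prems(2) by (intro sum_nonneg mult_nonneg_nonneg) auto
  have IH: "Z * (\<Prod>t\<in>T. \<Sum>v\<in>PiE S A. W v * f t v) \<le> (\<Sum>v\<in>PiE S A. W v * (\<Prod>t\<in>T. f t v)) * Z ^ card T"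
    using insert.IH insert.prems unfolding W_def Z_def by auto
  have H: "(\<Sum>v\<in>PiE S A. W v * f s v) * (\<Sum>v\<in>PiE S A. W v * (\<Prod>t\<in>T. f t v))
     \<le> (\<Sum>v\<in>PiE S A. W v * (f s v * (\<Prod>t\<in>T. f t v))) * Z"
    unfolding W_def Z_def
  proof (rule harris[OF assms(2,3,4)])
    show "\<forall>u\<in>PiE S A. \<forall>v\<in>PiE S A. (\<forall>l\<in>S. u l \<le> v l) \<longrightarrow> f s v \<le> f s u"
      using insert.prems(1) by simp
    show "\<forall>u\<in>PiE S A. \<forall>v\<in>PiE S A. (\<forall>l\<in>S. u l \<le> v l) \<longrightarrow> (\<Prod>t\<in>T. f t v) \<le> (\<Prod>t\<in>T. f t u)"
    proof (intro ballI impI prod_mono conjI)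
      fix u v t assume uv: "u \<in> PiE S A" "v \<in> PiE S A" "\<forall>l\<in>S. u l \<le> v l" and t: "t \<in> T"
      show "0 \<le> f t v" using insert.prems(2) uv t by auto
      show "f t v \<le> f t u" using insert.prems(1) uv t by auto
    qed
  qed
  have "Z * (\<Prod>t\<in>insert s T. \<Sum>v\<in>PiE S A. W v * f t v)
      = (\<Sum>v\<in>PiE S A. W v * f s v) * (Z * (\<Prod>t\<in>T. \<Sum>v\<in>PiE S A. W v * f t v))"
    using insert.hyps by (simp add: mult_ac)
  also have "\<dots> \<le> (\<Sum>v\<in>PiE S A. W v * f s v) * ((\<Sum>v\<in>PiE S A. W v * (\<Prod>t\<in>T. f t v)) * Z ^ card T)"
    by (rule mult_left_mono[OF IH fs_nn])
  also have "\<dots> = ((\<Sum>v\<in>PiE S A. W v * f s v) * (\<Sum>v\<in>PiE S A. W v * (\<Prod>t\<in>T. f t v))) * Z ^ card T"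
    by (simp add: mult_ac)
  also have "\<dots> \<le> ((\<Sum>v\<in>PiE S A. W v * (f s v * (\<Prod>t\<in>T. f t v))) * Z) * Z ^ card T"
    by (rule mult_right_mono[OF H]) (simp add: Znn)
  also have "\<dots> = (\<Sum>v\<in>PiE S A. W v * (\<Prod>t\<in>insert s T. f t v)) * Z ^ card (insert s T)"
    using insert.hyps by (simp add: mult_ac)
  finally show ?case unfolding W_def Z_def .
qed


theorem lemma2:
  fixes n B k :: nat and q :: "nat \<Rightarrow> nat \<Rightarrow> real"
    and Fs :: "nat \<Rightarrow> (nat \<Rightarrow> nat) set" and \<alpha> :: "nat \<Rightarrow> real"
  assumes "k \<ge> 1"
    and "is_dist n B q"
    and "\<forall>t\<in>{1..k}. down_closed n B (Fs t)"
    and "\<forall>t\<in>{1..k}. 0 \<le> \<alpha> t \<and> \<alpha> t \<le> 1"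
    and "\<forall>t\<in>{1..k}. \<exists>\<psi>. monotone_CRS n B (Fs t) q (\<alpha> t) \<psi>"
  shows "\<exists>\<psi>. monotone_CRS n B (\<Inter>t\<in>{1..k}. Fs t) q (\<Prod>t=1..k. \<alpha> t) \<psi>"
proof -
  obtain \<Psi> where \<Psi>: "\<forall>t\<in>{1..k}. monotone_CRS n B (Fs t) q (\<alpha> t) (\<Psi> t)"
    using assms(5) by metis
  define comb where "comb = (\<lambda>(v::nat \<Rightarrow> nat) (\<omega>::nat \<Rightarrow> nat \<Rightarrow> nat) (l::nat).
     if l \<in> {1..n} then (if \<forall>t\<in>{1..k}. \<omega> t l = v l then v l else 0) else undefined)"
  define \<psi> where "\<psi> = (\<lambda>v. map_pmf (comb v) (Pi_pmf {1..k} undefined (\<lambda>t. \<Psi> t v)))"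
  have supp: "w \<in> (\<Inter>t\<in>{1..k}. Fs t) \<and> (\<forall>i\<in>{1..n}. w i = 0 \<or> w i = v i)"
    if v: "v \<in> vecs n B" and w: "w \<in> set_pmf (\<psi> v)" for v w
  proof -
    obtain \<omega> where om: "\<omega> \<in> set_pmf (Pi_pmf {1..k} undefined (\<lambda>t. \<Psi> t v))" and wd: "w = comb v \<omega>"
      using w unfolding \<psi>_def by auto
    have omt: "\<omega> t \<in> set_pmf (\<Psi> t v)" if "t \<in> {1..k}" for t
      using om that by (auto simp: set_Pi_pmf PiE_dflt_def)
    have wv: "w \<in> vecs n B"
      using v unfolding wd comb_def vecs_def by (auto simp: PiE_def Pi_def extensional_def)
    have "w \<in> Fs t" if t: "t \<in> {1..k}" for t
    proof -
      have crs: "is_CRS n B (Fs t) q (\<alpha> t) (\<Psi> t)" using \<Psi> t unfolding monotone_CRS_def by auto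
      then have "\<omega> t \<in> Fs t" using omt[OF t] v unfolding is_CRS_def by auto
      moreover have "\<forall>l\<in>{1..n}. w l \<le> \<omega> t l"
        using t unfolding wd comb_def by auto
      ultimately show ?thesis using assms(3) t wv unfolding down_closed_def by blast
    qed
    moreover have "\<forall>i\<in>{1..n}. w i = 0 \<or> w i = v i" unfolding wd comb_def by auto
    ultimately show ?thesis by auto
  qed
  have probeq: "measure_pmf.prob (\<psi> u) {w. w i = u i} = (\<Prod>t\<in>{1..k}. measure_pmf.prob (\<Psi> t u) {w. w i = u i})"
    if i: "i \<in> {1..n}" and ui: "u i \<noteq> 0" for u i
  proof -
    have "comb u -` {w. w i = u i} = Pi {1..k} (\<lambda>t. {w. w i = u i})"
      using i ui unfolding comb_def by (auto simp: Pi_def)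
    then show ?thesis unfolding \<psi>_def by (simp add: measure_Pi_pmf_Pi)
  qed
  have prob0: "measure_pmf.prob (\<psi> u) {w. w i = u i} = 1"
    if i: "i \<in> {1..n}" and ui: "u i = 0" for u i
  proof -
    have "comb u -` {w. w i = u i} = UNIV"
      using i ui unfolding comb_def by auto
    then show ?thesis unfolding \<psi>_def by simp
  qed
  have mono: "measure_pmf.prob (\<psi> u) {w. w i = u i} \<ge> measure_pmf.prob (\<psi> v) {w. w i = v i}"
    if u: "u \<in> vecs n B" and v: "v \<in> vecs n B" and i: "i \<in> {1..n}" and uv: "u i = v i"
      and le: "\<forall>l\<in>{1..n}. u l \<le> v l" for u v i
  proof (cases "u i = 0")
    case True
    then show ?thesis using prob0[of i u, OF i True] by simp
  next
    case False
    have "(\<Prod>t\<in>{1..k}. measure_pmf.prob (\<Psi> t v) {w. w i = v i}) \<le> (\<Prod>t\<in>{1..k}. measure_pmf.prob (\<Psi> t u) {w. w i = u i})"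
    proof (rule prod_mono, rule conjI)
      fix t assume t: "t \<in> {1..k}"
      show "0 \<le> measure_pmf.prob (\<Psi> t v) {w. w i = v i}" by simp
      show "measure_pmf.prob (\<Psi> t v) {w. w i = v i} \<le> measure_pmf.prob (\<Psi> t u) {w. w i = u i}"
        using \<Psi> t u v i uv le unfolding monotone_CRS_def by blast
    qed
    then show ?thesis using probeq[of i u, OF i False] probeq[of i v, OF i] False uv by simp
  qed
  have crs2: "(\<Sum>v\<in>{v\<in>vecs n B. v i = j}. vprob n q v * measure_pmf.prob (\<psi> v) {w. w i = j})
          \<ge> (\<Prod>t=1..k. \<alpha> t) * (\<Sum>v\<in>{v\<in>vecs n B. v i = j}. vprob n q v)"
    if i: "i \<in> {1..n}" and j: "j \<in> {1..B}" for i j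
  proof -
    define A where "A = (\<lambda>l. if l = i then {j} else {0..B})"
    have VA: "{v\<in>vecs n B. v i = j} = PiE {1..n} A"
      using i j unfolding vecs_def A_def by (auto simp: PiE_def Pi_def split: if_splits)
    define W where "W = (\<lambda>v. \<Prod>l\<in>{1..n}. q l (v l))"
    define Z where "Z = (\<Sum>v\<in>PiE {1..n} A. W v)"
    define f where "f = (\<lambda>t v. measure_pmf.prob (\<Psi> t v) {w. w i = j})"
    have qnn: "\<forall>l\<in>{1..n}. \<forall>x\<in>A l. 0 \<le> q l x"
      using assms(2) j unfolding is_dist_def A_def by auto
    have Wnn: "0 \<le> W v" if "v \<in> PiE {1..n} A" for v
      unfolding W_def using that qnn by (intro prod_nonneg) (auto simp: PiE_def Pi_def)
    have Znn: "0 \<le> Z" unfolding Z_def using Wnn by (intro sum_nonneg) auto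
    have inV: "v \<in> vecs n B" "v i = j" if "v \<in> PiE {1..n} A" for v
      using that VA by auto
    have psi_eq: "measure_pmf.prob (\<psi> v) {w. w i = j} = (\<Prod>t\<in>{1..k}. f t v)" if "v \<in> PiE {1..n} A" for v
      using probeq[OF i, of v] inV[OF that] j unfolding f_def by auto
    have each: "\<alpha> t * Z \<le> (\<Sum>v\<in>PiE {1..n} A. W v * f t v)" if t: "t \<in> {1..k}" for t
    proof -
      have "is_CRS n B (Fs t) q (\<alpha> t) (\<Psi> t)" using \<Psi> t unfolding monotone_CRS_def by auto
      then have "(\<Sum>v\<in>{v\<in>vecs n B. v i = j}. vprob n q v * measure_pmf.prob (\<Psi> t v) {w. w i = j})
          \<ge> \<alpha> t * (\<Sum>v\<in>{v\<in>vecs n B. v i = j}. vprob n q v)"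
        using i j unfolding is_CRS_def by auto
      then show ?thesis unfolding VA Z_def W_def f_def vprob_def .
    qed
    have HP: "Z * (\<Prod>t\<in>{1..k}. \<Sum>v\<in>PiE {1..n} A. W v * f t v)
       \<le> (\<Sum>v\<in>PiE {1..n} A. W v * (\<Prod>t\<in>{1..k}. f t v)) * Z ^ card {1..k}"
      unfolding W_def Z_def
    proof (rule harris_prod)
      show "\<forall>l\<in>{1..n}. finite (A l)" unfolding A_def by auto
      show "\<forall>t\<in>{1..k}. \<forall>u\<in>PiE {1..n} A. \<forall>v\<in>PiE {1..n} A. (\<forall>l\<in>{1..n}. u l \<le> v l) \<longrightarrow> f t v \<le> f t u"
      proof (intro ballI impI)
        fix t u v assume t: "t \<in> {1..k}" and u: "u \<in> PiE {1..n} A" and v: "v \<in> PiE {1..n} A"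
          and le: "\<forall>l\<in>{1..n}. u l \<le> v l"
        show "f t v \<le> f t u"
        proof -
          have m: "\<forall>u\<in>vecs n B. \<forall>v\<in>vecs n B. \<forall>i\<in>{1..n}. u i = v i \<longrightarrow> (\<forall>l\<in>{1..n}. u l \<le> v l) \<longrightarrow>
             measure_pmf.prob (\<Psi> t u) {w. w i = u i} \<ge> measure_pmf.prob (\<Psi> t v) {w. w i = v i}"
            using \<Psi> t unfolding monotone_CRS_def by auto
          have "measure_pmf.prob (\<Psi> t u) {w. w i = u i} \<ge> measure_pmf.prob (\<Psi> t v) {w. w i = v i}"
            by (rule m[rule_format, OF inV(1)[OF u] inV(1)[OF v] i]) (use inV(2)[OF u] inV(2)[OF v] le in auto)
          then show ?thesis unfolding f_def using inV(2)[OF u] inV(2)[OF v] by simp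
        qed
      qed
      show "\<forall>t\<in>{1..k}. \<forall>v\<in>PiE {1..n} A. 0 \<le> f t v" unfolding f_def by simp
    qed (use qnn in auto)
    have "Z * ((\<Prod>t\<in>{1..k}. \<alpha> t) * Z ^ card {1..k}) = Z * (\<Prod>t\<in>{1..k}. \<alpha> t * Z)"
      by (simp add: prod.distrib)
    also have "\<dots> \<le> Z * (\<Prod>t\<in>{1..k}. \<Sum>v\<in>PiE {1..n} A. W v * f t v)"
      by (intro mult_left_mono prod_mono conjI each Znn mult_nonneg_nonneg) (use assms(4) Znn in auto)
    also note HP
    finally have main: "Z * ((\<Prod>t\<in>{1..k}. \<alpha> t) * Z ^ card {1..k})
        \<le> (\<Sum>v\<in>PiE {1..n} A. W v * (\<Prod>t\<in>{1..k}. f t v)) * Z ^ card {1..k}" .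
    have goal: "(\<Prod>t\<in>{1..k}. \<alpha> t) * Z \<le> (\<Sum>v\<in>PiE {1..n} A. W v * (\<Prod>t\<in>{1..k}. f t v))"
    proof (cases "Z = 0")
      case True
      then show ?thesis using Wnn by (simp add: sum_nonneg mult_nonneg_nonneg prod_nonneg f_def)
    next
      case False
      then have Zp: "0 < Z ^ card {1..k}" using Znn by simp
      from main have "((\<Prod>t\<in>{1..k}. \<alpha> t) * Z) * Z ^ card {1..k}
        \<le> (\<Sum>v\<in>PiE {1..n} A. W v * (\<Prod>t\<in>{1..k}. f t v)) * Z ^ card {1..k}"
        by (simp add: mult_ac)
      then show ?thesis using Zp by simp
    qed
    have "(\<Sum>v\<in>{v\<in>vecs n B. v i = j}. vprob n q v * measure_pmf.prob (\<psi> v) {w. w i = j})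
       = (\<Sum>v\<in>PiE {1..n} A. W v * (\<Prod>t\<in>{1..k}. f t v))"
      unfolding VA vprob_def W_def by (intro sum.cong refl) (simp add: psi_eq[unfolded W_def])
    moreover have "(\<Sum>v\<in>{v\<in>vecs n B. v i = j}. vprob n q v) = Z"
      unfolding VA vprob_def Z_def W_def by simp
    ultimately show ?thesis using goal by simp
  qed
  have "monotone_CRS n B (\<Inter>t\<in>{1..k}. Fs t) q (\<Prod>t=1..k. \<alpha> t) \<psi>"
    unfolding monotone_CRS_def is_CRS_def
  proof (intro conjI)
    show "\<forall>v\<in>vecs n B. \<forall>w\<in>set_pmf (\<psi> v). w \<in> (\<Inter>t\<in>{1..k}. Fs t) \<and> (\<forall>i\<in>{1..n}. w i = 0 \<or> w i = v i)"
      using supp by blast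
    show "\<forall>i\<in>{1..n}. \<forall>j\<in>{1..B}. (\<Sum>v\<in>{v\<in>vecs n B. v i = j}. vprob n q v * measure_pmf.prob (\<psi> v) {w. w i = j})
          \<ge> (\<Prod>t=1..k. \<alpha> t) * (\<Sum>v\<in>{v\<in>vecs n B. v i = j}. vprob n q v)"
      using crs2 by blast
    show "\<forall>u\<in>vecs n B. \<forall>v\<in>vecs n B. \<forall>i\<in>{1..n}.
        u i = v i \<longrightarrow> (\<forall>l\<in>{1..n}. u l \<le> v l) \<longrightarrow>
        measure_pmf.prob (\<psi> u) {w. w i = u i} \<ge> measure_pmf.prob (\<psi> v) {w. w i = v i}"
      using mono by blast
  qed
  then show ?thesis by blast
qed

end
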